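(* Consider a finite MDP with states $\mathcal{X}=\{1,\dots,n\}$, finite action set $\mathcal{A}$, costs $c(i,a)$, discount factor $\vartheta\in(0,1)$, a policy $\pi:\mathcal{X}\to\mathcal{A}$, uncertainty sets $\mathcal{P}^a_i$, proxy uncertainty sets $\widehat{\mathcal{P}^a_i}$, exploration matrix $P^{\widehat{\pi}}$ with stationary distribution $\xi$ and feature matrix $\Phi\in\mathbb{R}^{n\times d}$ as in the context. Suppose there is $\alpha\in(0,1)$ with $\vartheta p_j\le\alpha P^{\widehat{\pi}}_{ij}$ for all $i,j\in\mathcal{X}$, $a\in\mathcal{A}$, $p\in\mathcal{P}^a_i$; let $\beta^a_i:=\max_{y\in\widehat{U^a_i}}\min_{x\in U^a_i}\|y-x\|_\xi/\xi_{\min}$, $\beta:=\max_{i}\beta^{\pi(i)}_i$, and assume $\alpha^2+\vartheta^2\beta^2<\tfrac12$. Let $\widetilde{v}_\pi\in\mathbb{R}^n$ satisfy $\Pi\widehat{T}_\pi\widetilde{v}_\pi=\widetilde{v}_\pi$ and let $v_\pi\in\mathbb{R}^n$ satisfy $T_\pi v_\pi=v_\pi$. Then \[ \|\widetilde{v}_\pi-v_\pi\|_\xi\le\frac{\vartheta\beta\|v_\pi\|_\xi+\|\Pi v_\pi-v_\pi\|_\xi}{1-\sqrt{2(\alpha^2+\vartheta^2\beta^2)}} . \] In particular, if $\beta^{\pi(i)}_i=0$ for all $i$ (the proxy confidence regions equal the true ones), then $\|\widetilde{v}_\pi-v_\pi\|_\xi\le\dfrac{\|\Pi v_\pi-v_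\pi\|_\xi}{1-\alpha}$.
   Context: For each $i\in\mathcal{X},a\in\mathcal{A}$: $p^a_i\in\Delta_n$ is the nominal transition probability vector; $U^a_i\subseteq\mathbb{R}^n$ is a nonempty compact confidence region with $\mathcal{P}^a_i:=\{p^a_i+x\mid x\in U^a_i\}\subseteq\Delta_n$; $\widehat{U^a_i}\supseteq U^a_i$ is a nonempty compact proxy region and $\widehat{\mathcal{P}^a_i}:=\{p^a_i+y\mid y\in\widehat{U^a_i}\}$. $\sigma_S(v):=\sup_{s\in S}s^\top v$. Robust Bellman operator: $(T_\pi v)(i):=c(i,\pi(i))+\vartheta\,\sigma_{\mathcal{P}^{\pi(i)}_i}(v)$; proxy robust Bellman operator: $(\widehat{T}_\pi v)(i):=c(i,\pi(i))+\vartheta\,\sigma_{\widehat{\mathcal{P}^{\pi(i)}_i}}(v)$. $P^{\widehat{\pi}}$ is the $n\times n$ transition matrix of the exploration policy, $\xi$ its steady-state distribution with all entries positive, $\xi_{\min}=\min_i\xi_i$, $\|x\|_\xi:=(\sum_i\xi_ix_i^2)^{1/2}$, and $\Pi$ is the $\|\cdot\|_\xi$-orthogonal projection onto $S:=\{\Phi\theta\mid\theta\in\mathbb{R}^d\}$. *)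

theory Defs
  imports "HOL-Analysis.Analysis"
begin

definition prob_simplex :: "(real^'n::finite) set" where
  "prob_simplex = {p. (\<forall>j. p$j \<ge> 0) \<and> (\<Sum>j\<in>UNIV. p$j) = 1}"

definition support_fn :: "(real^'n::finite) set \<Rightarrow> real^'n \<Rightarrow> real" where
  "support_fn S v = (SUP s\<in>S. s \<bullet> v)"

definition shift_set :: "real^'n::finite \<Rightarrow> (real^'n) set \<Rightarrow> (real^'n) set" where
  "shift_set p U = {p + x | x. x \<in> U}"

definition bellman :: "('n::finite \<Rightarrow> 'a \<Rightarrow> real) \<Rightarrow> real \<Rightarrow> ('n \<Rightarrow> 'a)
    \<Rightarrow> ('n \<Rightarrow> 'a \<Rightarrow> (real^'n) set) \<Rightarrow> real^'n \<Rightarrow> real^'n" where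
  "bellman c \<theta> \<pi> Q v = (\<chi> i. c i (\<pi> i) + \<theta> * support_fn (Q i (\<pi> i)) v)"

definition xi_inner :: "real^'n::finite \<Rightarrow> real^'n \<Rightarrow> real^'n \<Rightarrow> real" where
  "xi_inner \<xi> x y = (\<Sum>i\<in>UNIV. \<xi>$i * x$i * y$i)"

definition xi_norm :: "real^'n::finite \<Rightarrow> real^'n \<Rightarrow> real" where
  "xi_norm \<xi> x = sqrt (\<Sum>i\<in>UNIV. \<xi>$i * (x$i)^2)"

definition xi_min :: "real^'n::finite \<Rightarrow> real" where
  "xi_min \<xi> = Min (range (\<lambda>i. \<xi>$i))"

definition feature_space :: "real^'d::finite^'n::finite \<Rightarrow> (real^'n) set" where
  "feature_space \<Phi> = range (\<lambda>\<theta>. \<Phi> *v \<theta>)"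

definition xi_proj :: "real^'n::finite \<Rightarrow> (real^'n) set \<Rightarrow> real^'n \<Rightarrow> real^'n" where
  "xi_proj \<xi> S x = (SOME p. p \<in> S \<and> (\<forall>s\<in>S. xi_inner \<xi> (x - p) s = 0))"

definition beta_coef :: "real^'n::finite \<Rightarrow> (real^'n) set \<Rightarrow> (real^'n) set \<Rightarrow> real" where
  "beta_coef \<xi> U Uhat = (SUP y\<in>Uhat. INF x\<in>U. xi_norm \<xi> (y - x)) / xi_min \<xi>"

end

theory Submission
  imports Defs
begin

definition Dm :: "real^'n::finite \<Rightarrow> real^'n \<Rightarrow> real^'n" where
  "Dm \<xi> x = (\<chi> i. sqrt (\<xi>$i) * x$i)"

lemma Dm_linear: "linear (Dm \<xi>)"
  by (rule linearI) (simp_all add: Dm_def vec_eq_iff algebra_simps)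

lemma Dm_diff: "Dm \<xi> (x - y) = Dm \<xi> x - Dm \<xi> y"
  by (simp add: Dm_def vec_eq_iff algebra_simps)

lemma xi_norm_Dm:
  assumes "\<And>i. \<xi>$i > 0"
  shows "xi_norm \<xi> x = norm (Dm \<xi> x)"
  using assms by (simp add: xi_norm_def norm_vec_def L2_set_def Dm_def power_mult_distrib less_imp_le)

lemma xi_inner_Dm:
  assumes "\<And>i. \<xi>$i > 0"
  shows "xi_inner \<xi> x y = Dm \<xi> x \<bullet> Dm \<xi> y"
  unfolding xi_inner_def inner_vec_def Dm_def
  apply (rule sum.cong, simp)
  using assms by (simp add: algebra_simps real_sqrt_mult[symmetric] less_imp_le)

lemma Dm_inj:
  assumes xi: "\<And>i. \<xi>$i > 0" and e: "Dm \<xi> x = Dm \<xi> y" shows "x = y"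
proof (rule vec_eq_iff[THEN iffD2], rule allI)
  fix i
  have "sqrt (\<xi>$i) * x$i = sqrt (\<xi>$i) * y$i" using e by (simp add: Dm_def vec_eq_iff)
  moreover have "sqrt (\<xi>$i) > 0" using xi by simp
  ultimately show "x$i = y$i" by simp
qed

lemma feature_subspace: "subspace (feature_space \<Phi>)"
  unfolding feature_space_def
  using linear_subspace_image[OF matrix_vector_mul_linear[of \<Phi>] subspace_UNIV]
  by (simp add: matrix_vector_mul_linear)

lemma proj_exists:
  assumes xi: "\<And>i. \<xi>$i > 0" and S: "subspace S"
  shows "\<exists>p. p \<in> S \<and> (\<forall>s\<in>S. xi_inner \<xi> (x - p) s = 0)"
proof -
  have sub: "subspace (Dm \<xi> ` S)" by (rule linear_subspace_image[OF Dm_linear S])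
  obtain y z where y: "y \<in> span (Dm \<xi> ` S)" and z: "\<And>w. w \<in> span (Dm \<xi> ` S) \<Longrightarrow> orthogonal z w"
     and xyz: "Dm \<xi> x = y + z"
    using orthogonal_subspace_decomp_exists[of "Dm \<xi> ` S" "Dm \<xi> x"] by metis
  have "span (Dm \<xi> ` S) = Dm \<xi> ` S" using sub by (simp add: span_eq_iff)
  with y obtain p where p: "p \<in> S" "y = Dm \<xi> p" by auto
  show ?thesis
  proof (intro exI conjI ballI)
    show "p \<in> S" by fact
    fix s assume s: "s \<in> S"
    have "Dm \<xi> s \<in> span (Dm \<xi> ` S)" using s by (simp add: span_base)
    then have "z \<bullet> Dm \<xi> s = 0" using z orthogonal_def by blast
    moreover have "Dm \<xi> (x - p) = z" using xyz p by (simp add: Dm_diff)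
    ultimately show "xi_inner \<xi> (x - p) s = 0" by (simp add: xi_inner_Dm[OF xi])
  qed
qed

lemma xi_inner_diff:
  assumes xi: "\<And>i. \<xi>$i > 0"
  shows "xi_inner \<xi> (a - b) s = xi_inner \<xi> a s - xi_inner \<xi> b s"
  by (simp add: xi_inner_Dm[OF xi] Dm_diff inner_diff_left)

lemma proj_spec:
  assumes xi: "\<And>i. \<xi>$i > 0" and S: "subspace S"
  shows "xi_proj \<xi> S x \<in> S \<and> (\<forall>s\<in>S. xi_inner \<xi> (x - xi_proj \<xi> S x) s = 0)"
  unfolding xi_proj_def by (rule someI_ex[OF proj_exists[OF xi S]])

lemma proj_unique:
  assumes xi: "\<And>i. \<xi>$i > 0" and S: "subspace S"
    and p: "p \<in> S" "\<forall>s\<in>S. xi_inner \<xi> (x - p) s = 0"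
  shows "xi_proj \<xi> S x = p"
proof -
  let ?q = "xi_proj \<xi> S x"
  have q: "?q \<in> S" "\<forall>s\<in>S. xi_inner \<xi> (x - ?q) s = 0" using proj_spec[OF xi S] by auto
  have d: "?q - p \<in> S" using q p S by (simp add: subspace_diff)
  have "xi_inner \<xi> (?q - p) (?q - p) = xi_inner \<xi> (x - p) (?q - p) - xi_inner \<xi> (x - ?q) (?q - p)"
    using xi_inner_diff[OF xi, of "x - p" "x - ?q" "?q - p"] by simp
  also have "\<dots> = 0" using q p d by simp
  finally have "Dm \<xi> (?q - p) = 0" by (simp add: xi_inner_Dm[OF xi])
  then have "Dm \<xi> (?q - p) = Dm \<xi> 0" by (simp add: Dm_def vec_eq_iff)
  then have "?q - p = 0" by (rule Dm_inj[OF xi])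
  then show ?thesis by simp
qed

lemma proj_diff:
  assumes xi: "\<And>i. \<xi>$i > 0" and S: "subspace S"
  shows "xi_proj \<xi> S a - xi_proj \<xi> S b = xi_proj \<xi> S (a - b)"
proof -
  have a: "xi_proj \<xi> S a \<in> S" "\<forall>s\<in>S. xi_inner \<xi> (a - xi_proj \<xi> S a) s = 0"
    and b: "xi_proj \<xi> S b \<in> S" "\<forall>s\<in>S. xi_inner \<xi> (b - xi_proj \<xi> S b) s = 0"
    using proj_spec[OF xi S] by auto
  show ?thesis
  proof (rule proj_unique[OF xi S, symmetric])
    show "xi_proj \<xi> S a - xi_proj \<xi> S b \<in> S" using a b S by (simp add: subspace_diff)
    show "\<forall>s\<in>S. xi_inner \<xi> (a - b - (xi_proj \<xi> S a - xi_proj \<xi> S b)) s = 0"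
    proof
      fix s assume s: "s \<in> S"
      have eq: "a - b - (xi_proj \<xi> S a - xi_proj \<xi> S b) = (a - xi_proj \<xi> S a) - (b - xi_proj \<xi> S b)"
        by simp
      show "xi_inner \<xi> (a - b - (xi_proj \<xi> S a - xi_proj \<xi> S b)) s = 0"
        unfolding eq using xi_inner_diff[OF xi, of "a - xi_proj \<xi> S a" "b - xi_proj \<xi> S b" s] a b s by simp
    qed
  qed
qed

lemma proj_norm:
  assumes xi: "\<And>i. \<xi>$i > 0" and S: "subspace S"
  shows "xi_norm \<xi> (xi_proj \<xi> S x) \<le> xi_norm \<xi> x"
proof -
  let ?q = "xi_proj \<xi> S x"
  have q: "?q \<in> S" "\<forall>s\<in>S. xi_inner \<xi> (x - ?q) s = 0" using proj_spec[OF xi S] by auto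
  have o: "orthogonal (Dm \<xi> ?q) (Dm \<xi> (x - ?q))"
    using q by (simp add: orthogonal_def xi_inner_Dm[OF xi] inner_commute)
  have "Dm \<xi> x = Dm \<xi> ?q + Dm \<xi> (x - ?q)" by (simp add: Dm_diff)
  then have "(norm (Dm \<xi> x))\<^sup>2 = (norm (Dm \<xi> ?q))\<^sup>2 + (norm (Dm \<xi> (x - ?q)))\<^sup>2"
    using norm_add_Pythagorean[OF o] by simp
  then have "(norm (Dm \<xi> ?q))\<^sup>2 \<le> (norm (Dm \<xi> x))\<^sup>2" by simp
  then have "norm (Dm \<xi> ?q) \<le> norm (Dm \<xi> x)" by (rule power2_le_imp_le) simp
  then show ?thesis by (simp add: xi_norm_Dm[OF xi])
qed

lemma xi_norm_triangle:
  assumes xi: "\<And>i. \<xi>$i > 0"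
  shows "xi_norm \<xi> (x + y) \<le> xi_norm \<xi> x + xi_norm \<xi> y"
proof -
  have "Dm \<xi> (x + y) = Dm \<xi> x + Dm \<xi> y" by (simp add: Dm_def vec_eq_iff algebra_simps)
  then show ?thesis by (simp add: xi_norm_Dm[OF xi] norm_triangle_ineq)
qed

lemma xi_norm_nonneg:
  assumes xi: "\<And>i. \<xi>$i > 0" shows "xi_norm \<xi> x \<ge> 0" by (simp add: xi_norm_Dm[OF xi])

lemma xi_norm_mono:
  assumes xi: "\<And>i. \<xi>$i > 0" and le: "\<And>i. \<bar>x$i\<bar> \<le> y$i"
  shows "xi_norm \<xi> x \<le> xi_norm \<xi> y"
  unfolding xi_norm_def
proof (rule real_sqrt_le_mono, rule sum_mono)
  fix i
  have "\<bar>x$i\<bar>^2 \<le> (y$i)^2" using le[of i] by (intro power_mono) auto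
  then have "(x$i)^2 \<le> (y$i)^2" by simp
  then show "\<xi>$i * (x$i)^2 \<le> \<xi>$i * (y$i)^2" using xi[of i] by (simp add: mult_left_mono)
qed

lemma xi_norm_abs: "xi_norm \<xi> (\<chi> i. \<bar>x$i\<bar>) = xi_norm \<xi> x"
  by (simp add: xi_norm_def)

lemma xi_norm_scale: "xi_norm \<xi> (\<chi> i. c * x$i) = \<bar>c\<bar> * xi_norm \<xi> x"
proof -
  have "(\<Sum>i\<in>UNIV. \<xi>$i * (c * x$i)^2) = (\<Sum>i\<in>UNIV. c^2 * (\<xi>$i * (x$i)^2))"
    by (rule sum.cong) (simp_all add: power_mult_distrib)
  also have "\<dots> = c^2 * (\<Sum>i\<in>UNIV. \<xi>$i * (x$i)^2)" by (rule sum_distrib_left[symmetric])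
  finally show ?thesis by (simp add: xi_norm_def real_sqrt_mult)
qed

lemma xi_norm_const:
  assumes "(\<Sum>i\<in>UNIV. \<xi>$i) = 1"
  shows "xi_norm \<xi> (\<chi> i. c) = \<bar>c\<bar>"
proof -
  have "(\<Sum>i\<in>UNIV. \<xi>$i * c^2) = (\<Sum>i\<in>UNIV. \<xi>$i) * c^2" by (rule sum_distrib_right[symmetric])
  then have "(\<Sum>i\<in>UNIV. \<xi>$i * c^2) = c^2" using assms by simp
  then show ?thesis by (simp add: xi_norm_def)
qed

lemma jensen_row:
  fixes w :: "'n::finite \<Rightarrow> real"
  assumes nn: "\<And>j. w j \<ge> 0" and s1: "(\<Sum>j\<in>UNIV. w j) = 1"
  shows "(\<Sum>j\<in>UNIV. w j * x j)^2 \<le> (\<Sum>j\<in>UNIV. w j * (x j)^2)"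
proof -
  define m where "m = (\<Sum>j\<in>UNIV. w j * x j)"
  have "0 \<le> (\<Sum>j\<in>UNIV. w j * (x j - m)^2)" using nn by (intro sum_nonneg) simp
  also have "\<dots> = (\<Sum>j\<in>UNIV. w j * (x j)^2 - 2 * m * (w j * x j) + m^2 * w j)"
    by (rule sum.cong) (simp_all add: power2_eq_square algebra_simps)
  also have "\<dots> = (\<Sum>j\<in>UNIV. w j * (x j)^2) - 2 * m * (\<Sum>j\<in>UNIV. w j * x j) + m^2 * (\<Sum>j\<in>UNIV. w j)"
    by (simp add: sum.distrib sum_subtractf sum_distrib_left)
  also have "\<dots> = (\<Sum>j\<in>UNIV. w j * (x j)^2) - m^2"
    using s1 by (simp add: m_def[symmetric] power2_eq_square)
  finally show ?thesis by (simp add: m_def)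
qed

lemma xi_norm_contract:
  fixes P :: "real^'n::finite^'n"
  assumes xi: "\<And>i. \<xi>$i > 0" and nn: "\<And>i j. P$i$j \<ge> 0"
    and rows: "\<And>i. (\<Sum>j\<in>UNIV. P$i$j) = 1" and stat: "\<xi> v* P = \<xi>"
  shows "xi_norm \<xi> (P *v x) \<le> xi_norm \<xi> x"
  unfolding xi_norm_def
proof (rule real_sqrt_le_mono)
  have "(\<Sum>i\<in>UNIV. \<xi>$i * ((P *v x)$i)^2) \<le> (\<Sum>i\<in>UNIV. \<xi>$i * (\<Sum>j\<in>UNIV. P$i$j * (x$j)^2))"
  proof (rule sum_mono)
    fix i
    have "((P *v x)$i)^2 \<le> (\<Sum>j\<in>UNIV. P$i$j * (x$j)^2)"
      unfolding matrix_vector_mult_def using jensen_row[of "\<lambda>j. P$i$j" "\<lambda>j. x$j"] nn rows by simp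
    then show "\<xi>$i * ((P *v x)$i)^2 \<le> \<xi>$i * (\<Sum>j\<in>UNIV. P$i$j * (x$j)^2)"
      using xi[of i] by (simp add: mult_left_mono)
  qed
  also have "\<dots> = (\<Sum>i\<in>UNIV. \<Sum>j\<in>UNIV. \<xi>$i * P$i$j * (x$j)^2)"
    by (simp add: sum_distrib_left mult.assoc)
  also have "\<dots> = (\<Sum>j\<in>UNIV. \<Sum>i\<in>UNIV. \<xi>$i * P$i$j * (x$j)^2)"
    by (rule sum.swap)
  also have "\<dots> = (\<Sum>j\<in>UNIV. (\<Sum>i\<in>UNIV. \<xi>$i * P$i$j) * (x$j)^2)"
    by (simp add: sum_distrib_right)
  also have "\<dots> = (\<Sum>j\<in>UNIV. \<xi>$j * (x$j)^2)"
  proof (rule sum.cong)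
    fix j
    have "(\<xi> v* P)$j = (\<Sum>i\<in>UNIV. \<xi>$i * P$i$j)" by (simp add: vector_matrix_mult_def)
    then show "(\<Sum>i\<in>UNIV. \<xi>$i * P$i$j) * (x$j)^2 = \<xi>$j * (x$j)^2" using stat by simp
  qed simp
  finally show "(\<Sum>i\<in>UNIV. \<xi>$i * ((P *v x)$i)^2) \<le> (\<Sum>j\<in>UNIV. \<xi>$j * (x$j)^2)" .
qed

lemma xi_min_pos:
  assumes xi: "\<And>i. \<xi>$i > 0" shows "xi_min \<xi> > 0"
proof -
  have "xi_min \<xi> \<in> range (\<lambda>i. \<xi>$i)" unfolding xi_min_def by (rule Min_in) auto
  then show ?thesis using xi by auto
qed

lemma xi_min_le: "xi_min \<xi> \<le> \<xi>$j"
  unfolding xi_min_def by (rule Min_le) auto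

lemma norm_le_xi:
  assumes xi: "\<And>i. \<xi>$i > 0"
  shows "sqrt (xi_min \<xi>) * norm a \<le> xi_norm \<xi> a"
proof -
  have "xi_min \<xi> * (\<Sum>j\<in>UNIV. (a$j)^2) \<le> (\<Sum>j\<in>UNIV. \<xi>$j * (a$j)^2)"
    unfolding sum_distrib_left by (intro sum_mono mult_right_mono xi_min_le) simp
  then have "sqrt (xi_min \<xi> * (\<Sum>j\<in>UNIV. (a$j)^2)) \<le> xi_norm \<xi> a"
    unfolding xi_norm_def by (rule real_sqrt_le_mono)
  then show ?thesis by (simp add: real_sqrt_mult norm_vec_def L2_set_def)
qed

lemma xi_cauchy:
  assumes xi: "\<And>i. \<xi>$i > 0"
  shows "a \<bullet> b \<le> xi_norm \<xi> a * xi_norm \<xi> b / xi_min \<xi>"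
proof -
  have m: "xi_min \<xi> > 0" by (rule xi_min_pos[OF xi])
  have "xi_min \<xi> * (a \<bullet> b) \<le> xi_min \<xi> * (norm a * norm b)"
    using m by (intro mult_left_mono) (auto intro: order_trans[OF abs_ge_self Cauchy_Schwarz_ineq2])
  also have "\<dots> = (sqrt (xi_min \<xi>) * norm a) * (sqrt (xi_min \<xi>) * norm b)"
    using m by (simp add: algebra_simps)
  also have "\<dots> \<le> xi_norm \<xi> a * xi_norm \<xi> b"
    using m by (intro mult_mono norm_le_xi[OF xi]) (auto simp: xi_norm_nonneg[OF xi])
  finally show ?thesis using m by (simp add: field_simps)
qed

lemma shift_compact: "compact U \<Longrightarrow> compact (shift_set p U)"
proof -
  assume "compact U"
  moreover have "shift_set p U = (+) p ` U" by (auto simp: shift_set_def)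
  ultimately show ?thesis by (simp add: compact_translation)
qed

lemma bdd_inner: "compact S \<Longrightarrow> bdd_above ((\<lambda>s. s \<bullet> v) ` S)"
proof -
  assume S: "compact S"
  have "continuous_on S (\<lambda>s. s \<bullet> v)" by (intro continuous_intros)
  then have "compact ((\<lambda>s. s \<bullet> v) ` S)" using S by (rule compact_continuous_image)
  then show ?thesis by (intro bounded_imp_bdd_above compact_imp_bounded)
qed

lemma support_upper: "compact S \<Longrightarrow> s \<in> S \<Longrightarrow> s \<bullet> v \<le> support_fn S v"
  unfolding support_fn_def by (rule cSUP_upper[OF _ bdd_inner])

lemma support_least: "S \<noteq> {} \<Longrightarrow> (\<And>s. s \<in> S \<Longrightarrow> s \<bullet> v \<le> B) \<Longrightarrow> support_fn S v \<le> B"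
  unfolding support_fn_def by (rule cSUP_least)

lemma xi_norm_cont: "continuous_on A (\<lambda>y. xi_norm \<xi> (y - x0))"
  unfolding xi_norm_def by (intro continuous_intros)

lemma xi_norm_cont2: "continuous_on A (\<lambda>x. xi_norm \<xi> (y - x))"
  unfolding xi_norm_def by (intro continuous_intros)

lemma beta_prop:
  assumes xi: "\<And>i. \<xi>$i > 0" and U: "compact U" "U \<noteq> {}" and Uh: "compact Uh" "Uh \<noteq> {}"
  shows "beta_coef \<xi> U Uh \<ge> 0"
    and "\<And>y. y \<in> Uh \<Longrightarrow> \<exists>x\<in>U. xi_norm \<xi> (y - x) \<le> beta_coef \<xi> U Uh * xi_min \<xi>"
proof -
  have m: "xi_min \<xi> > 0" by (rule xi_min_pos[OF xi])
  obtain x0 where x0: "x0 \<in> U" using U by auto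
  let ?g = "\<lambda>y. INF x\<in>U. xi_norm \<xi> (y - x)"
  have bb: "bdd_below ((\<lambda>x. xi_norm \<xi> (y - x)) ` U)" for y
    by (rule bdd_belowI[of _ 0]) (auto simp: xi_norm_nonneg[OF xi])
  have g_le: "?g y \<le> xi_norm \<xi> (y - x0)" for y by (rule cINF_lower[OF bb x0])
  have g_ge: "?g y \<ge> 0" for y using U(2) by (intro cINF_greatest) (auto simp: xi_norm_nonneg[OF xi])
  have "compact ((\<lambda>y. xi_norm \<xi> (y - x0)) ` Uh)" by (rule compact_continuous_image[OF xi_norm_cont Uh(1)])
  then have "bdd_above ((\<lambda>y. xi_norm \<xi> (y - x0)) ` Uh)" by (intro bounded_imp_bdd_above compact_imp_bounded)
  then obtain M where M: "\<And>y. y \<in> Uh \<Longrightarrow> xi_norm \<xi> (y - x0) \<le> M" by (auto simp: bdd_above_def)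
  have ba: "bdd_above (?g ` Uh)" using g_le M by (intro bdd_aboveI[of _ M]) (auto intro: order_trans)
  have supge: "?g y \<le> (SUP y\<in>Uh. ?g y)" if "y \<in> Uh" for y by (rule cSUP_upper[OF that ba])
  obtain y0 where "y0 \<in> Uh" using Uh by auto
  then have "0 \<le> (SUP y\<in>Uh. ?g y)" using supge[of y0] g_ge[of y0] by linarith
  then show "beta_coef \<xi> U Uh \<ge> 0" unfolding beta_coef_def using m by simp
  fix y assume y: "y \<in> Uh"
  obtain x where x: "x \<in> U" "\<forall>z\<in>U. xi_norm \<xi> (y - x) \<le> xi_norm \<xi> (y - z)"
    using continuous_attains_inf[OF U(1) U(2) xi_norm_cont2[of U \<xi> y]] by auto
  have "?g y = xi_norm \<xi> (y - x)"
    by (rule antisym, rule cINF_lower[OF bb x(1)], rule cINF_greatest) (use U(2) x in auto)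
  then have "xi_norm \<xi> (y - x) \<le> (SUP y\<in>Uh. ?g y)" using supge[OF y] by simp
  also have "\<dots> = beta_coef \<xi> U Uh * xi_min \<xi>" unfolding beta_coef_def using m by simp
  finally show "\<exists>x\<in>U. xi_norm \<xi> (y - x) \<le> beta_coef \<xi> U Uh * xi_min \<xi>" using x(1) by blast
qed

theorem corollary2:
  fixes c :: "'n::finite \<Rightarrow> 'a::finite \<Rightarrow> real"
    and \<theta> \<alpha> :: real
    and \<pi> :: "'n \<Rightarrow> 'a"
    and p :: "'n \<Rightarrow> 'a \<Rightarrow> real^'n"
    and U Uhat :: "'n \<Rightarrow> 'a \<Rightarrow> (real^'n) set"
    and Pexp :: "real^'n^'n"
    and \<xi> :: "real^'n"
    and \<Phi> :: "real^'d::finite^'n"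
    and vt v :: "real^'n"
  assumes theta: "0 < \<theta>" "\<theta> < 1"
    and p_simplex: "\<And>i a. p i a \<in> prob_simplex"
    and U_ne: "\<And>i a. U i a \<noteq> {}" and U_compact: "\<And>i a. compact (U i a)"
    and U_sub: "\<And>i a. shift_set (p i a) (U i a) \<subseteq> prob_simplex"
    and Uhat_ne: "\<And>i a. Uhat i a \<noteq> {}" and Uhat_compact: "\<And>i a. compact (Uhat i a)"
    and U_Uhat: "\<And>i a. U i a \<subseteq> Uhat i a"
    and Pexp_nonneg: "\<And>i j. Pexp$i$j \<ge> 0"
    and Pexp_rows: "\<And>i. (\<Sum>j\<in>UNIV. Pexp$i$j) = 1"
    and xi_pos: "\<And>i. \<xi>$i > 0"
    and xi_sum: "(\<Sum>i\<in>UNIV. \<xi>$i) = 1"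
    and xi_stat: "\<xi> v* Pexp = \<xi>"
    and alpha: "0 < \<alpha>" "\<alpha> < 1"
    and alpha_bound: "\<And>i j a q. q \<in> shift_set (p i a) (U i a) \<Longrightarrow> \<theta> * q$j \<le> \<alpha> * Pexp$i$j"
    and small: "\<alpha>^2 + \<theta>^2 * (MAX i. beta_coef \<xi> (U i (\<pi> i)) (Uhat i (\<pi> i)))^2 < 1/2"
    and vt_fix: "xi_proj \<xi> (feature_space \<Phi>)
                   (bellman c \<theta> \<pi> (\<lambda>i a. shift_set (p i a) (Uhat i a)) vt) = vt"
    and v_fix: "bellman c \<theta> \<pi> (\<lambda>i a. shift_set (p i a) (U i a)) v = v"
  shows "xi_norm \<xi> (vt - v) \<le>
           (\<theta> * (MAX i. beta_coef \<xi> (U i (\<pi> i)) (Uhat i (\<pi> i))) * xi_norm \<xi> v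
             + xi_norm \<xi> (xi_proj \<xi> (feature_space \<Phi>) v - v))
           / (1 - sqrt (2 * (\<alpha>^2 + \<theta>^2 * (MAX i. beta_coef \<xi> (U i (\<pi> i)) (Uhat i (\<pi> i)))^2)))
       \<and> ((\<forall>i. beta_coef \<xi> (U i (\<pi> i)) (Uhat i (\<pi> i)) = 0) \<longrightarrow>
           xi_norm \<xi> (vt - v) \<le> xi_norm \<xi> (xi_proj \<xi> (feature_space \<Phi>) v - v) / (1 - \<alpha>))"
proof -
  have xi: "\<And>i. \<xi>$i > 0" by (rule xi_pos)
  define B where "B = (MAX i. beta_coef \<xi> (U i (\<pi> i)) (Uhat i (\<pi> i)))"
  define Pi where "Pi i = shift_set (p i (\<pi> i)) (U i (\<pi> i))" for i
  define Ph where "Ph i = shift_set (p i (\<pi> i)) (Uhat i (\<pi> i))" for i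
  define S where "S = feature_space \<Phi>"
  have S: "subspace S" unfolding S_def by (rule feature_subspace)
  define bh where "bh = bellman c \<theta> \<pi> (\<lambda>i a. shift_set (p i a) (Uhat i a)) vt"
  define e where "e = vt - v"
  define ae where "ae = (\<chi> j. \<bar>e$j\<bar>)"
  define E where "E = xi_norm \<xi> e"
  define N where "N = xi_norm \<xi> v"
  define N' where "N' = xi_norm \<xi> vt"
  define R where "R = xi_norm \<xi> (xi_proj \<xi> S v - v)"
  have Pi_c: "compact (Pi i)" "Pi i \<noteq> {}" for i
    unfolding Pi_def using U_ne[of i "\<pi> i"] shift_compact[OF U_compact[of i "\<pi> i"]]
    by (auto simp: shift_set_def)
  have Ph_c: "compact (Ph i)" "Ph i \<noteq> {}" for i
    unfolding Ph_def using Uhat_ne[of i "\<pi> i"] shift_compact[OF Uhat_compact[of i "\<pi> i"]]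
    by (auto simp: shift_set_def)
  have PiPh: "Pi i \<subseteq> Ph i" for i unfolding Pi_def Ph_def shift_set_def using U_Uhat by blast
  have qlem: "\<theta> * (q \<bullet> w) \<le> \<alpha> * (Pexp *v (\<chi> j. \<bar>w$j\<bar>))$i" if q: "q \<in> Pi i" for q w i
  proof -
    have qs: "q \<in> prob_simplex" using q U_sub unfolding Pi_def by blast
    then have qn: "q$j \<ge> 0" for j by (simp add: prob_simplex_def)
    have ab: "\<theta> * q$j \<le> \<alpha> * Pexp$i$j" for j using alpha_bound q unfolding Pi_def by blast
    have "\<theta> * (q \<bullet> w) = (\<Sum>j\<in>UNIV. (\<theta> * q$j) * w$j)"
      by (simp add: inner_vec_def sum_distrib_left mult.assoc)
    also have "\<dots> \<le> (\<Sum>j\<in>UNIV. (\<alpha> * Pexp$i$j) * \<bar>w$j\<bar>)"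
    proof (rule sum_mono)
      fix j
      have "(\<theta> * q$j) * w$j \<le> (\<theta> * q$j) * \<bar>w$j\<bar>"
        using theta qn[of j] by (intro mult_left_mono) auto
      also have "\<dots> \<le> (\<alpha> * Pexp$i$j) * \<bar>w$j\<bar>" using ab[of j] by (intro mult_right_mono) auto
      finally show "(\<theta> * q$j) * w$j \<le> (\<alpha> * Pexp$i$j) * \<bar>w$j\<bar>" .
    qed
    also have "\<dots> = \<alpha> * (Pexp *v (\<chi> j. \<bar>w$j\<bar>))$i"
      by (simp add: matrix_vector_mult_def sum_distrib_left mult.assoc)
    finally show ?thesis .
  qed
  have beta_i: "0 \<le> beta_coef \<xi> (U i (\<pi> i)) (Uhat i (\<pi> i))"
    and beta_x: "\<And>y. y \<in> Uhat i (\<pi> i) \<Longrightarrow> \<exists>x\<in>U i (\<pi> i).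
        xi_norm \<xi> (y - x) \<le> beta_coef \<xi> (U i (\<pi> i)) (Uhat i (\<pi> i)) * xi_min \<xi>" for i
    using beta_prop[OF xi U_compact U_ne Uhat_compact Uhat_ne] by blast+
  have B_ge: "beta_coef \<xi> (U i (\<pi> i)) (Uhat i (\<pi> i)) \<le> B" for i
    unfolding B_def by (rule Max_ge) auto
  have B0: "B \<ge> 0" using beta_i B_ge order_trans by blast
  have m: "xi_min \<xi> > 0" by (rule xi_min_pos[OF xi])
  have N'0: "N' \<ge> 0" unfolding N'_def by (rule xi_norm_nonneg[OF xi])
  have A: "\<theta> * support_fn (Ph i) vt \<le> \<theta> * support_fn (Pi i) v + \<alpha> * (Pexp *v ae)$i + \<theta> * B * N'" for i
  proof -
    have "support_fn (Ph i) vt \<le> (\<theta> * support_fn (Pi i) v + \<alpha> * (Pexp *v ae)$i + \<theta> * B * N') / \<theta>"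
    proof (rule support_least[OF Ph_c(2)])
      fix s assume "s \<in> Ph i"
      then obtain y where y: "y \<in> Uhat i (\<pi> i)" "s = p i (\<pi> i) + y" unfolding Ph_def shift_set_def by blast
      obtain x where x: "x \<in> U i (\<pi> i)"
        "xi_norm \<xi> (y - x) \<le> beta_coef \<xi> (U i (\<pi> i)) (Uhat i (\<pi> i)) * xi_min \<xi>"
        using beta_x[OF y(1)] by blast
      define q where "q = p i (\<pi> i) + x"
      have q: "q \<in> Pi i" unfolding q_def Pi_def shift_set_def using x(1) by blast
      have sq: "s \<bullet> vt = q \<bullet> v + q \<bullet> e + (y - x) \<bullet> vt"
        unfolding y(2) q_def e_def by (simp add: inner_diff_left inner_diff_right inner_add_left)
      have 1: "\<theta> * (q \<bullet> v) \<le> \<theta> * support_fn (Pi i) v"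
        using support_upper[OF Pi_c(1) q] theta by simp
      have 2: "\<theta> * (q \<bullet> e) \<le> \<alpha> * (Pexp *v ae)$i" using qlem[OF q, of e] unfolding ae_def .
      have "(y - x) \<bullet> vt \<le> xi_norm \<xi> (y - x) * N' / xi_min \<xi>"
        unfolding N'_def by (rule xi_cauchy[OF xi])
      also have "\<dots> \<le> (B * xi_min \<xi>) * N' / xi_min \<xi>"
        using x(2) B_ge[of i] m N'0
        by (intro divide_right_mono mult_right_mono order_trans[OF x(2)]) auto
      also have "\<dots> = B * N'" using m by simp
      finally have 3: "\<theta> * ((y - x) \<bullet> vt) \<le> \<theta> * B * N'"
        using theta by (simp add: mult_left_mono mult.assoc)
      have "\<theta> * (s \<bullet> vt) \<le> \<theta> * support_fn (Pi i) v + \<alpha> * (Pexp *v ae)$i + \<theta> * B * N'"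
        unfolding sq using 1 2 3 by (simp add: distrib_left)
      then show "s \<bullet> vt \<le> (\<theta> * support_fn (Pi i) v + \<alpha> * (Pexp *v ae)$i + \<theta> * B * N') / \<theta>"
        using theta by (simp add: pos_le_divide_eq mult.commute)
    qed
    then show ?thesis using theta by (simp add: pos_le_divide_eq mult.commute)
  qed
  have Bq: "\<theta> * support_fn (Pi i) v \<le> \<theta> * support_fn (Ph i) vt + \<alpha> * (Pexp *v ae)$i" for i
  proof -
    have "support_fn (Pi i) v \<le> (\<theta> * support_fn (Ph i) vt + \<alpha> * (Pexp *v ae)$i) / \<theta>"
    proof (rule support_least[OF Pi_c(2)])
      fix q assume q: "q \<in> Pi i"
      have "(\<chi> j. \<bar>(- e)$j\<bar>) = ae" by (simp add: ae_def)
      then have 2: "\<theta> * (q \<bullet> (- e)) \<le> \<alpha> * (Pexp *v ae)$i" using qlem[OF q, of "- e"] by simp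
      have 1: "\<theta> * (q \<bullet> vt) \<le> \<theta> * support_fn (Ph i) vt"
        using support_upper[OF Ph_c(1), of q i vt] PiPh[of i] q theta by (auto intro: mult_left_mono)
      have "q \<bullet> v = q \<bullet> vt + q \<bullet> (- e)" unfolding e_def by (simp add: inner_diff_right)
      then have "\<theta> * (q \<bullet> v) \<le> \<theta> * support_fn (Ph i) vt + \<alpha> * (Pexp *v ae)$i"
        using 1 2 by (simp add: right_diff_distrib)
      then show "q \<bullet> v \<le> (\<theta> * support_fn (Ph i) vt + \<alpha> * (Pexp *v ae)$i) / \<theta>"
        using theta by (simp add: pos_le_divide_eq mult.commute)
    qed
    then show ?thesis using theta by (simp add: pos_le_divide_eq mult.commute)
  qed
  define w where "w = bh - v"
  define g where "g = (\<chi> i. \<alpha> * (Pexp *v ae)$i + \<theta> * B * N')"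
  have wi: "w$i = \<theta> * support_fn (Ph i) vt - \<theta> * support_fn (Pi i) v" for i
  proof -
    have "v$i = c i (\<pi> i) + \<theta> * support_fn (Pi i) v"
      using arg_cong[OF v_fix, of "\<lambda>x. x$i"] by (simp add: bellman_def Pi_def)
    then show ?thesis unfolding w_def bh_def by (simp add: bellman_def Ph_def)
  qed
  have tBN: "\<theta> * B * N' \<ge> 0" using theta B0 N'0 by simp
  have wg: "\<bar>w$i\<bar> \<le> g$i" for i
    using A[of i] Bq[of i] tBN unfolding wi g_def abs_le_iff by simp
  have "xi_norm \<xi> w \<le> xi_norm \<xi> g" by (rule xi_norm_mono[OF xi wg])
  also have "g = (\<chi> i. \<alpha> * (Pexp *v ae)$i) + (\<chi> i. \<theta> * B * N')" by (simp add: g_def vec_eq_iff)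
  also have "xi_norm \<xi> \<dots> \<le> xi_norm \<xi> (\<chi> i. \<alpha> * (Pexp *v ae)$i) + xi_norm \<xi> (\<chi> i. \<theta> * B * N')"
    by (rule xi_norm_triangle[OF xi])
  also have "xi_norm \<xi> (\<chi> i. \<alpha> * (Pexp *v ae)$i) = \<alpha> * xi_norm \<xi> (Pexp *v ae)"
    using alpha by (simp add: xi_norm_scale)
  also have "xi_norm \<xi> (\<chi> i. \<theta> * B * N') = \<theta> * B * N'"
    using xi_norm_const[OF xi_sum] theta B0 N'0 by simp
  also have "\<alpha> * xi_norm \<xi> (Pexp *v ae) \<le> \<alpha> * E"
  proof -
    have "xi_norm \<xi> (Pexp *v ae) \<le> xi_norm \<xi> ae"
      by (rule xi_norm_contract[OF xi Pexp_nonneg Pexp_rows xi_stat])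
    also have "\<dots> = E" unfolding ae_def E_def by (rule xi_norm_abs)
    finally show ?thesis using alpha by (simp add: mult_left_mono)
  qed
  finally have wn: "xi_norm \<xi> w \<le> \<alpha> * E + \<theta> * B * N'" by simp
  have vtS: "xi_proj \<xi> S bh = vt" using vt_fix unfolding S_def bh_def .
  have "vt - xi_proj \<xi> S v = xi_proj \<xi> S w"
    unfolding w_def using proj_diff[OF xi S, of bh v] vtS by simp
  then have "xi_norm \<xi> (vt - xi_proj \<xi> S v) \<le> xi_norm \<xi> w" using proj_norm[OF xi S, of w] by simp
  moreover have "e = (vt - xi_proj \<xi> S v) + (xi_proj \<xi> S v - v)" unfolding e_def by simp
  ultimately have "E \<le> xi_norm \<xi> w + R"
    unfolding E_def R_def using xi_norm_triangle[OF xi, of "vt - xi_proj \<xi> S v" "xi_proj \<xi> S v - v"] by simp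
  moreover have "N' \<le> E + N"
    unfolding N'_def E_def N_def using xi_norm_triangle[OF xi, of e v] by (simp add: e_def)
  ultimately have "E \<le> \<alpha> * E + \<theta> * B * (E + N) + R"
    using wn theta B0 by (smt (verit) mult_left_mono mult_nonneg_nonneg)
  then have key: "E * (1 - \<alpha> - \<theta> * B) \<le> \<theta> * B * N + R" by (simp add: algebra_simps)
  have E0: "E \<ge> 0" unfolding E_def by (rule xi_norm_nonneg[OF xi])
  define X where "X = \<alpha>^2 + \<theta>^2 * B^2"
  have X: "X < 1/2" using small unfolding X_def B_def .
  have sl: "\<alpha> + \<theta> * B \<le> sqrt (2 * X)"
  proof (rule real_le_rsqrt)
    have "0 \<le> (\<alpha> - \<theta> * B)^2" by simp
    then show "(\<alpha> + \<theta> * B)^2 \<le> 2 * X" unfolding X_def by (simp add: power2_eq_square algebra_simps)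
  qed
  have s1: "sqrt (2 * X) < 1" using X by (simp add: real_sqrt_less_iff)
  have part1: "E \<le> (\<theta> * B * N + R) / (1 - sqrt (2 * X))"
  proof -
    have "E * (1 - sqrt (2 * X)) \<le> E * (1 - \<alpha> - \<theta> * B)" using E0 sl by (intro mult_left_mono) auto
    then show ?thesis using key s1 by (simp add: pos_le_divide_eq)
  qed
  have part2: "E \<le> R / (1 - \<alpha>)" if all0: "\<forall>i. beta_coef \<xi> (U i (\<pi> i)) (Uhat i (\<pi> i)) = 0"
  proof -
    have "B \<in> range (\<lambda>i. beta_coef \<xi> (U i (\<pi> i)) (Uhat i (\<pi> i)))" unfolding B_def by (rule Max_in) auto
    then have "B = 0" using all0 by auto
    then show ?thesis using key alpha by (simp add: pos_le_divide_eq)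
  qed
  show ?thesis
    using part1 part2 unfolding E_def e_def R_def S_def N_def X_def B_def by simp
qed

end
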